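(* Let $F_n$, $n=1,2,\dots$, and $F$ be metric preserving functions on $[0,+\infty)^2$. If $F$ is continuous and $F_n\to F$ pointwise, then $F_n\to F$ uniformly on every compact subset of $[0,+\infty)^2$.
   Context: A function $F\colon[0,+\infty)^2\to[0,+\infty)$ is metric preserving if for any metric spaces $(X,d_X),(Y,d_Y)$ the function $((x,y),(x',y'))\mapsto F(d_X(x,x'),d_Y(y,y'))$ is a metric on $X\times Y$. *)

theory Defs
  imports "HOL-Analysis.Analysis"
begin

definition metric_on :: "'a set \<Rightarrow> ('a \<Rightarrow> 'a \<Rightarrow> real) \<Rightarrow> bool" where
  "metric_on M d \<longleftrightarrow>
     (\<forall>x\<in>M. \<forall>y\<in>M. 0 \<le> d x y \<and> d x y = d y x \<and> (d x y = 0 \<longleftrightarrow> x = y)) \<and>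
     (\<forall>x\<in>M. \<forall>y\<in>M. \<forall>z\<in>M. d x z \<le> d x y + d y z)"

text \<open>F (only its values on [0,inf)^2 matter) is metric preserving if for all metric
  spaces (X,dX), (Y,dY) the map ((x,y),(x',y')) to F (dX x x') (dY y y') is a metric on X x Y.
  Metric spaces are represented with carriers inside the fixed type real.\<close>
definition metric_preserving :: "(real \<Rightarrow> real \<Rightarrow> real) \<Rightarrow> bool" where
  "metric_preserving F \<longleftrightarrow>
     (\<forall>(X::real set) (Y::real set) dX dY. metric_on X dX \<and> metric_on Y dY \<longrightarrow>
        metric_on (X \<times> Y) (\<lambda>(x, y) (x', y'). F (dX x x') (dY y y')))"

end

theory Submission imports Defs begin
lemma metric_abs: "metric_on UNIV (\<lambda>x y. \<bar>x - y\<bar> :: real)"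
  unfolding metric_on_def by auto
lemma metric_trunc: "(e::real) > 0 \<Longrightarrow> metric_on UNIV (\<lambda>x y. min \<bar>x - y\<bar> e)"
  unfolding metric_on_def by auto
lemma mp_tri:
  assumes "metric_preserving F" "0\<le>a" "0\<le>b" "0\<le>c" "0\<le>d"
  shows "F a b \<le> F c d + F \<bar>c-a\<bar> \<bar>d-b\<bar>"
proof -
  have "metric_on (UNIV \<times> UNIV) (\<lambda>(x, y) (x', y'). F (\<bar>x - x'\<bar>) (\<bar>y - y'\<bar>))"
    using assms(1) metric_abs unfolding metric_preserving_def by blast
  hence "F \<bar>0 - a\<bar> \<bar>0 - b\<bar> \<le> F \<bar>0 - c\<bar> \<bar>0 - d\<bar> + F \<bar>c - a\<bar> \<bar>d - b\<bar>"
    unfolding metric_on_def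
    by (drule_tac conjunct2) (drule bspec[of _ _ "(0,0)"], simp, drule bspec[of _ _ "(c,d)"], simp, drule bspec[of _ _ "(a,b)"], simp, simp)
  thus ?thesis using assms by simp
qed
lemma mp_small:
  assumes "metric_preserving F" "e>0" "0\<le>h" "h\<le>e" "0\<le>k" "k\<le>e"
  shows "F h k \<le> 2 * F e e"
proof -
  have "metric_on (UNIV \<times> UNIV) (\<lambda>(x, y) (x', y'). F (min \<bar>x - x'\<bar> e) (min \<bar>y - y'\<bar> e))"
    using assms(1) metric_trunc[OF assms(2)] unfolding metric_preserving_def by blast
  hence "F (min \<bar>0 - h\<bar> e) (min \<bar>0 - k\<bar> e) \<le> F (min \<bar>0 - 2*e\<bar> e) (min \<bar>0 - 2*e\<bar> e) + F (min \<bar>2*e - h\<bar> e) (min \<bar>2*e - k\<bar> e)"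
    unfolding metric_on_def
    by (drule_tac conjunct2) (drule bspec[of _ _ "(0,0)"], simp, drule bspec[of _ _ "(2*e,2*e)"], simp, drule bspec[of _ _ "(h,k)"], simp, simp)
  moreover have "min \<bar>0 - h\<bar> e = h" "min \<bar>0 - k\<bar> e = k" "min \<bar>0 - 2*e\<bar> e = e"
     "min \<bar>2*e - h\<bar> e = e" "min \<bar>2*e - k\<bar> e = e" using assms by auto
  ultimately show ?thesis by simp
qed
lemma mp_zero: "metric_preserving F \<Longrightarrow> F 0 0 = 0"
  using mp_tri[of F 0 0 0 0] apply simp
proof -
  assume "metric_preserving F"
  hence "metric_on (UNIV \<times> UNIV) (\<lambda>(x, y) (x', y'). F (\<bar>x - x'\<bar>) (\<bar>y - y'\<bar>))"
    using metric_abs unfolding metric_preserving_def by blast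
  thus ?thesis unfolding metric_on_def by (drule_tac conjunct1) (drule bspec[of _ _ "(0,0)"], simp, drule bspec[of _ _ "(0,0)"], simp, simp)
qed
lemma mp_close:
  assumes "metric_preserving G" "e>0" "0\<le>a" "0\<le>b" "0\<le>c" "0\<le>d" "\<bar>a-c\<bar> \<le> e" "\<bar>b-d\<bar> \<le> e"
  shows "\<bar>G a b - G c d\<bar> \<le> 2 * G e e"
proof -
  have 1: "G a b \<le> G c d + G \<bar>c-a\<bar> \<bar>d-b\<bar>" using mp_tri[OF assms(1) assms(3-6)] .
  have 2: "G c d \<le> G a b + G \<bar>a-c\<bar> \<bar>b-d\<bar>" using mp_tri[OF assms(1) assms(5,6,3,4)] .
  have 3: "G \<bar>c-a\<bar> \<bar>d-b\<bar> \<le> 2 * G e e" using mp_small[OF assms(1,2)] assms(7,8) by simp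
  have 4: "G \<bar>a-c\<bar> \<bar>b-d\<bar> \<le> 2 * G e e" using mp_small[OF assms(1,2)] assms(7,8) by simp
  show ?thesis using 1 2 3 4 by linarith
qed

theorem mainTheorem16:
  fixes Fs :: "nat \<Rightarrow> real \<Rightarrow> real \<Rightarrow> real" and F :: "real \<Rightarrow> real \<Rightarrow> real"
  assumes "\<And>n. n \<ge> 1 \<Longrightarrow> metric_preserving (Fs n)"
    and "metric_preserving F"
    and "continuous_on ({0..} \<times> {0..}) (\<lambda>p. F (fst p) (snd p))"
    and "\<And>a b. a \<ge> 0 \<Longrightarrow> b \<ge> 0 \<Longrightarrow> (\<lambda>n. Fs n a b) \<longlonglongrightarrow> F a b"
  shows "\<forall>K. compact K \<and> K \<subseteq> {0..} \<times> {0..} \<longrightarrow>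
           uniform_limit K (\<lambda>n p. Fs n (fst p) (snd p)) (\<lambda>p. F (fst p) (snd p)) sequentially"
proof (intro allI impI)
  fix K :: "(real \<times> real) set"
  assume K: "compact K \<and> K \<subseteq> {0..} \<times> {0..}"
  show "uniform_limit K (\<lambda>n p. Fs n (fst p) (snd p)) (\<lambda>p. F (fst p) (snd p)) sequentially"
    unfolding uniform_limit_iff
  proof (intro allI impI)
    fix e :: real assume e: "e > 0"
    define \<epsilon> where "\<epsilon> = e / 5"
    have \<epsilon>: "\<epsilon> > 0" using e by (simp add: \<epsilon>_def)
    have F0: "F 0 0 = 0" using mp_zero[OF assms(2)] .
    have "(0::real,0::real) \<in> {0..} \<times> {0..}" by simp
    then obtain d where d: "d > 0" and
      dd: "\<And>x'. x' \<in> {0..} \<times> {0..} \<Longrightarrow> dist x' (0,0) < d \<Longrightarrow> dist (F (fst x') (snd x')) (F 0 0) < \<epsilon>"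
      using assms(3) \<epsilon> unfolding continuous_on_iff by (metis fst_conv snd_conv)
    define \<delta> where "\<delta> = d / 2"
    have \<delta>: "\<delta> > 0" using d by (simp add: \<delta>_def)
    have "dist (\<delta>, \<delta>) (0::real,0::real) = sqrt (\<delta>\<^sup>2 + \<delta>\<^sup>2)"
      by (simp add: dist_Pair_Pair dist_real_def)
    also have "\<dots> < sqrt ((2*\<delta>)\<^sup>2)"
      using \<delta> by (intro real_sqrt_less_mono) (simp add: power2_eq_square)
    also have "\<dots> = d" using \<delta> by (simp add: \<delta>_def)
    finally have "dist (\<delta>, \<delta>) (0::real,0::real) < d" .
    from dd[OF _ this] \<delta> have Fd: "F \<delta> \<delta> < \<epsilon>" using F0 by (simp add: dist_real_def)
    have ev1: "eventually (\<lambda>n. Fs n \<delta> \<delta> < \<epsilon> \<and> n \<ge> 1) sequentially"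
    proof -
      have "eventually (\<lambda>n. Fs n \<delta> \<delta> < \<epsilon>) sequentially"
        using order_tendstoD(2)[OF assms(4) Fd] \<delta> by simp
      moreover have "eventually (\<lambda>n. n \<ge> (1::nat)) sequentially" by (simp add: eventually_ge_at_top)
      ultimately show ?thesis by (simp add: eventually_conj_iff)
    qed
    obtain C where C: "C \<subseteq> K" "finite C" "K \<subseteq> (\<Union>c\<in>C. ball c \<delta>)"
    proof -
      have "K \<subseteq> (\<Union>c\<in>K. ball c \<delta>)" using \<delta> by auto
      thus ?thesis using compactE_image[of K K "\<lambda>c. ball c \<delta>"] K that by blast
    qed
    have ev2: "eventually (\<lambda>n. \<forall>c\<in>C. dist (Fs n (fst c) (snd c)) (F (fst c) (snd c)) < \<epsilon>) sequentially"
    proof (rule eventually_ball_finite[OF C(2)], intro ballI)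
      fix c assume "c \<in> C"
      hence "fst c \<ge> 0" "snd c \<ge> 0" using C(1) K by auto
      thus "eventually (\<lambda>n. dist (Fs n (fst c) (snd c)) (F (fst c) (snd c)) < \<epsilon>) sequentially"
        using tendstoD[OF assms(4) \<epsilon>] by blast
    qed
    show "eventually (\<lambda>n. \<forall>p\<in>K. dist (Fs n (fst p) (snd p)) (F (fst p) (snd p)) < e) sequentially"
      using ev1 ev2
    proof eventually_elim
      case (elim n)
      show ?case
      proof
        fix p assume p: "p \<in> K"
        then obtain c where c: "c \<in> C" "dist p c < \<delta>" using C(3) by (auto simp: dist_commute)
        have pq: "fst p \<ge> 0" "snd p \<ge> 0" "fst c \<ge> 0" "snd c \<ge> 0" using p c C(1) K by auto
        have "\<bar>fst p - fst c\<bar> \<le> \<delta>" using dist_fst_le[of p c] c(2) by (simp add: dist_real_def)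
        moreover have "\<bar>snd p - snd c\<bar> \<le> \<delta>" using dist_snd_le[of p c] c(2) by (simp add: dist_real_def)
        ultimately have
          a: "\<bar>Fs n (fst p) (snd p) - Fs n (fst c) (snd c)\<bar> \<le> 2 * Fs n \<delta> \<delta>" and
          b: "\<bar>F (fst p) (snd p) - F (fst c) (snd c)\<bar> \<le> 2 * F \<delta> \<delta>"
          using mp_close[OF assms(1) \<delta> pq] mp_close[OF assms(2) \<delta> pq] elim by auto
        have "\<bar>Fs n (fst c) (snd c) - F (fst c) (snd c)\<bar> < \<epsilon>" using elim c(1) by (simp add: dist_real_def)
        thus "dist (Fs n (fst p) (snd p)) (F (fst p) (snd p)) < e"
          using a b elim Fd unfolding dist_real_def \<epsilon>_def by linarith
      qed
    qed
  qed
qed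

end
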